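(* Let $\psi_u$ and $\psi_{\tilde u}$ be independent, each uniformly distributed on $(0,2\pi)$. Then, conditioned on $t=\frac34-\frac{\psi_u}{2\pi}$ (equivalently, on $\psi_u$), the CDF of $Y_{\tilde u}$ is, for $Y\in[0,\zeta_{\tilde u}/V^2]$, $$F_{Y_{\tilde u}}(Y\mid t)=1-\frac{1}{\pi}\arccos\!\Big(\frac{2V^2}{\zeta_{\tilde u}}Y-1\Big),\qquad V=\frac{\sin(\pi/\mu)}{W}.$$ Since this does not depend on $t$, $Y_{\tilde u}$ is independent of $\psi_u$ and hence of $\alpha_{\mathrm I}$.
   Context: Setup: Let $W\ge 1$ be an integer and $\mu\ge 2$ an even integer, and set $K=\mu W+1$. Let $\zeta_u>0$, and for $k=1,\dots,K$ let $h_{u,k}=\zeta_u^{1/2}e^{j(\psi_u+2\pi(k-1)/\mu)}$, where $j=\sqrt{-1}$. Let $\mathcal K_1=\{k\in\{2,\dots,K\}:\operatorname{Re}(h_{u,k})>0\}$ and $\alpha_{\mathrm I}=\big(\sum_{k\in\mathcal K_1}\operatorname{Re}(h_{u,k})\big)^2$. For an interfering user $\tilde u$ with $\zeta_{\tilde u}>0$ and phase $\psi_{\tilde u}$, let $h_{\tilde u,k}=\zeta_{\tilde u}^{1/2}e^{j(\psi_{\tilde u}+2\pi(k-1)/\mu)}$ and $Y_{\tilde u}=\big(\sum_{k\in\mathcal K_1}\operatorname{Re}(h_{\tilde u,k})\big)^2$. *)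

theory Defs
  imports "HOL-Probability.Probability"
begin

definition hcoef :: "real \<Rightarrow> real \<Rightarrow> nat \<Rightarrow> nat \<Rightarrow> complex" where
  "hcoef zeta psi mu k = complex_of_real (sqrt zeta) * cis (psi + 2 * pi * (real k - 1) / real mu)"

text \<open>The index set K_1 = {k in {2..K} : Re h_{u,k} > 0}, K = mu W + 1.\<close>
definition K1 :: "nat \<Rightarrow> nat \<Rightarrow> real \<Rightarrow> real \<Rightarrow> nat set" where
  "K1 W mu zeta_u psi_u = {k \<in> {2..mu * W + 1}. Re (hcoef zeta_u psi_u mu k) > 0}"

definition alphaI :: "nat \<Rightarrow> nat \<Rightarrow> real \<Rightarrow> real \<Rightarrow> real" where
  "alphaI W mu zeta_u psi_u = (\<Sum>k\<in>K1 W mu zeta_u psi_u. Re (hcoef zeta_u psi_u mu k))\<^sup>2"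

definition Yint :: "nat \<Rightarrow> nat \<Rightarrow> real \<Rightarrow> real \<Rightarrow> real \<Rightarrow> real \<Rightarrow> real" where
  "Yint W mu zeta_u psi_u zeta_t psi_t =
     (\<Sum>k\<in>K1 W mu zeta_u psi_u. Re (hcoef zeta_t psi_t mu k))\<^sup>2"

definition Unif :: "real measure" where
  "Unif = uniform_measure lborel {0<..<2 * pi}"

end

theory Submission
  imports Defs
begin

lemma (in prob_space) indep_varI2:
  assumes "random_variable S X" "random_variable T Y"
    and "\<And>A B. A \<in> sets S \<Longrightarrow> B \<in> sets T \<Longrightarrow>
      prob ((X -` A \<inter> space M) \<inter> (Y -` B \<inter> space M)) = prob (X -` A \<inter> space M) * prob (Y -` B \<inter> space M)"
  shows "indep_var S X T Y"
proof -
  have "indep_set {X -` A \<inter> space M | A. A \<in> sets S} {Y -` A \<inter> space M | A. A \<in> sets T}"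
    unfolding indep_sets2_eq using assms by (auto simp: measurable_def)
  then show ?thesis
    unfolding indep_var_def indep_vars_def2 indep_set_def using assms
    apply (auto split: bool.split)
    apply (erule back_subst[where P="\<lambda>F. indep_sets F UNIV"])
    apply (auto simp: fun_eq_iff split: bool.split)
    done
qed

lemma emeasure_lborel_translate:
  assumes "S \<in> sets borel"
  shows "emeasure lborel ((\<lambda>t::real. t + d) -` S) = emeasure lborel S"
proof -
  have "emeasure (distr lborel borel ((+) d)) S = emeasure lborel ((+) d -` S \<inter> space lborel)"
    using assms by (intro emeasure_distr) auto
  moreover have "(\<lambda>t. t + d) = (+) d" by (auto simp: fun_eq_iff)
  ultimately show ?thesis by (simp add: lborel_distr_plus)
qed

lemma periodic_int:
  fixes P :: "real \<Rightarrow> bool"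
  assumes per: "\<And>x. P (x + 2*pi) = P x"
  shows "P (x + 2*pi * of_int k) = P x"
proof -
  have nat: "P (y + 2*pi * real m) = P y" for y m
  proof (induction m)
    case (Suc m)
    have "y + 2*pi * real (Suc m) = (y + 2*pi * real m) + 2*pi" by (simp add: algebra_simps)
    then show ?case using Suc per[of "y + 2*pi * real m"] by (simp add: add.assoc)
  qed simp
  show ?thesis
  proof (cases "k \<ge> 0")
    case True
    then show ?thesis using nat[of x "nat k"] by simp
  next
    case False
    then have "x = (x + 2*pi * of_int k) + 2*pi * real (nat (-k))" by simp
    then show ?thesis using nat[of "x + 2*pi * of_int k" "nat (-k)"] by metis
  qed
qed

lemma shift_lborel:
  fixes P :: "real \<Rightarrow> bool"
  assumes meas[measurable]: "Measurable.pred borel P" and per: "\<And>x. P (x + 2*pi) = P x"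
  shows "emeasure lborel {t\<in>{0<..<2*pi}. P (t + c)} = emeasure lborel {t\<in>{0<..<2*pi}. P t}"
proof -
  define c' where "c' = c - 2*pi * of_int (floor (c/(2*pi)))"
  have c'0: "0 \<le> c'" and c'1: "c' < 2*pi"
  proof -
    have "of_int (floor (c/(2*pi))) \<le> c/(2*pi)" "c/(2*pi) < of_int (floor (c/(2*pi))) + 1"
      by linarith+
    then have "2*pi * of_int (floor (c/(2*pi))) \<le> 2*pi*(c/(2*pi))"
      "2*pi*(c/(2*pi)) < 2*pi*(of_int (floor (c/(2*pi))) + 1)"
      by (intro mult_left_mono mult_strict_left_mono; simp)+
    then show "0 \<le> c'" "c' < 2*pi" unfolding c'_def by (auto simp: algebra_simps)
  qed
  have Pc: "P (t + c) = P (t + c')" for t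
    using periodic_int[of P, OF per, of "t + c'" "floor (c/(2*pi))"] unfolding c'_def by (simp add: algebra_simps)
  define A1 where "A1 = {t\<in>{0<..<2*pi - c'}. P (t + c')}"
  define A2 where "A2 = {t\<in>{2*pi - c'<..<2*pi}. P (t + c')}"
  have [measurable]: "A1 \<in> sets borel" "A2 \<in> sets borel" unfolding A1_def A2_def by measurable
  have A1: "A1 = (\<lambda>t. t + c') -` {s\<in>{c'<..<2*pi}. P s}" unfolding A1_def by auto
  have A2: "A2 = (\<lambda>t. t + (c' - 2*pi)) -` {s\<in>{0<..<c'}. P s}"
    unfolding A2_def using per[of "_ + (c' - 2*pi)"] by (auto simp: algebra_simps)
  have "emeasure lborel {t\<in>{0<..<2*pi}. P (t + c)} = emeasure lborel (A1 \<union> A2)"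
    unfolding Pc using c'0 c'1
    by (intro emeasure_eq_AE eventually_mono[OF AE_lborel_singleton[of "2*pi - c'"]])
       (auto simp: A1_def A2_def)
  also have "\<dots> = emeasure lborel A1 + emeasure lborel A2"
    by (intro plus_emeasure[symmetric]) (auto simp: A1_def A2_def)
  also have "emeasure lborel A1 = emeasure lborel {s\<in>{c'<..<2*pi}. P s}"
    unfolding A1 by (intro emeasure_lborel_translate) measurable
  also have "emeasure lborel A2 = emeasure lborel {s\<in>{0<..<c'}. P s}"
    unfolding A2 by (intro emeasure_lborel_translate) measurable
  also have "emeasure lborel {s\<in>{c'<..<2*pi}. P s} + emeasure lborel {s\<in>{0<..<c'}. P s}
      = emeasure lborel ({s\<in>{c'<..<2*pi}. P s} \<union> {s\<in>{0<..<c'}. P s})"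
    by (intro plus_emeasure) auto
  also have "\<dots> = emeasure lborel {t\<in>{0<..<2*pi}. P t}"
    using c'0 c'1
    by (intro emeasure_eq_AE eventually_mono[OF AE_lborel_singleton[of "c'"]]) auto
  finally show ?thesis .
qed

lemma abs_cos_le_iff_0pi:
  fixes t s :: real
  assumes "0 \<le> t" "t \<le> pi" "0 \<le> s" "s \<le> 1"
  shows "\<bar>cos t\<bar> \<le> s \<longleftrightarrow> arccos s \<le> t \<and> t \<le> pi - arccos s"
proof -
  have ct: "arccos (cos t) = t" using assms by (simp add: arccos_cos)
  have "cos t \<le> s \<longleftrightarrow> arccos s \<le> arccos (cos t)"
    using assms by (subst arccos_le_mono) auto
  moreover have "-s \<le> cos t \<longleftrightarrow> arccos (cos t) \<le> arccos (-s)"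
    using assms by (subst arccos_le_mono) auto
  moreover have "arccos (-s) = pi - arccos s" using assms by (simp add: arccos_minus)
  ultimately show ?thesis using ct by (auto simp: abs_le_iff)
qed

lemma cos_sq_set:
  fixes z :: real
  assumes "0 \<le> z" "z \<le> 1"
  defines "b \<equiv> arccos (sqrt z)"
  shows "emeasure lborel {t\<in>{0<..<2*pi}. (cos t)\<^sup>2 \<le> z} = ennreal (2 * (pi - 2 * b))"
proof -
  let ?s = "sqrt z"
  have s: "0 \<le> ?s" "?s \<le> 1" using assms by auto
  have b: "0 \<le> b" "b \<le> pi/2"
  proof -
    have "-1 \<le> sqrt z" using s by linarith
    then have "0 \<le> arccos (sqrt z)" using arccos_lbound s(2) by blast
    then show "0 \<le> b" by (simp add: b_def)
    have "arccos (sqrt z) \<le> pi/2" using arccos_le_pi2 s by blast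
    then show "b \<le> pi/2" by (simp add: b_def)
  qed
  have sq: "(cos t)\<^sup>2 \<le> z \<longleftrightarrow> \<bar>cos t\<bar> \<le> ?s" for t
    using assms by (metis abs_le_square_iff abs_of_nonneg real_sqrt_ge_zero real_sqrt_pow2 s(1))
  have key: "t\<in>{0<..<2*pi} \<and> (cos t)\<^sup>2 \<le> z \<longleftrightarrow> t \<in> ({b..pi-b} \<union> {pi+b<..2*pi-b})"
    if "t \<noteq> pi + b" "t \<noteq> 0" "t \<noteq> 2*pi" for t
  proof (cases "t \<le> pi")
    case True
    then show ?thesis using abs_cos_le_iff_0pi[of t ?s] s b that unfolding sq b_def
      by (cases "0 \<le> t") auto
  next
    case False
    have "cos t = cos (2*pi - t)" by (simp add: cos_diff)
    then show ?thesis using abs_cos_le_iff_0pi[of "2*pi - t" ?s] s b that False unfolding sq b_def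
      by (cases "t < 2*pi") auto
  qed
  have "emeasure lborel {t\<in>{0<..<2*pi}. (cos t)\<^sup>2 \<le> z} = emeasure lborel ({b..pi-b} \<union> {pi+b<..2*pi-b})"
    by (intro emeasure_eq_AE eventually_mono[OF AE_conjI[OF AE_lborel_singleton[of "pi+b"] AE_conjI[OF AE_lborel_singleton[of 0] AE_lborel_singleton[of "2*pi"]]]])
       (use key in auto)
  also have "\<dots> = emeasure lborel {b..pi-b} + emeasure lborel {pi+b<..2*pi-b}"
    using b by (intro plus_emeasure[symmetric]) auto
  also have "\<dots> = ennreal (2 * (pi - 2 * b))"
    using b by (simp add: ennreal_plus[symmetric] del: ennreal_plus)
  finally show ?thesis .
qed

lemma space_Unif[simp]: "space Unif = UNIV" and sets_Unif[simp]: "sets Unif = sets borel"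
  by (auto simp: Unif_def)

lemma prob_space_Unif: "prob_space Unif"
  unfolding Unif_def by (intro prob_space_uniform_measure) auto

lemma emeasure_Unif:
  assumes [measurable]: "Measurable.pred borel Q"
  shows "emeasure Unif {t. Q t} = emeasure lborel {t\<in>{0<..<2*pi}. Q t} / ennreal (2*pi)"
proof -
  have "{t. Q t} \<in> sets borel" by measurable
  then have "emeasure Unif {t. Q t} = emeasure lborel ({0<..<2*pi} \<inter> {t. Q t}) / emeasure lborel {0<..<2*pi::real}"
    unfolding Unif_def by (subst emeasure_uniform_measure) auto
  moreover have "{0<..<2*pi} \<inter> {t. Q t} = {t\<in>{0<..<2*pi}. Q t}" by auto
  ultimately show ?thesis by simp
qed

lemma Unif_shift:
  fixes P :: "real \<Rightarrow> bool"
  assumes [measurable]: "Measurable.pred borel P" and per: "\<And>x. P (x + 2*pi) = P x"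
  shows "emeasure Unif {t. P (t + c)} = emeasure Unif {t. P t}"
proof -
  have [measurable]: "Measurable.pred borel (\<lambda>t. P (t + c))" by measurable
  show ?thesis using shift_lborel[OF assms, of c] by (subst (1 2) emeasure_Unif) auto
qed

lemma sin_sq_cdf:
  fixes K y c :: real
  assumes K: "K > 0" and y: "0 \<le> y" "y \<le> K"
  shows "measure Unif {t. K * (sin (t + c))\<^sup>2 \<le> y} = 1 - arccos (2 * y / K - 1) / pi"
proof -
  define z where "z = y / K"
  have z: "0 \<le> z" "z \<le> 1" using K y by (auto simp: z_def field_simps)
  define b where "b = arccos (sqrt z)"
  have b: "0 \<le> b" "b \<le> pi/2"
  proof -
    have "0 \<le> sqrt z" using z by simp
    then have "-1 \<le> sqrt z" by linarith
    then have "0 \<le> arccos (sqrt z)" using arccos_lbound z by simp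
    then show "0 \<le> b" by (simp add: b_def)
    have "arccos (sqrt z) \<le> pi/2" using arccos_le_pi2 z by simp
    then show "b \<le> pi/2" by (simp add: b_def)
  qed
  have eq1: "K * (sin x)\<^sup>2 \<le> y \<longleftrightarrow> (sin x)\<^sup>2 \<le> z" for x
    using K by (simp add: z_def field_simps)
  have "emeasure Unif {t. K * (sin (t + c))\<^sup>2 \<le> y} = emeasure Unif {t. K * (sin t)\<^sup>2 \<le> y}"
    by (rule Unif_shift[where P="\<lambda>x. K * (sin x)\<^sup>2 \<le> y"]) auto
  also have "\<dots> = emeasure Unif {t. (cos (t + - (pi/2)))\<^sup>2 \<le> z}"
    by (simp add: eq1 cos_diff[where y="pi/2", simplified])
  also have "\<dots> = emeasure Unif {t. (cos t)\<^sup>2 \<le> z}"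
    by (rule Unif_shift[where P="\<lambda>x. (cos x)\<^sup>2 \<le> z"]) auto
  also have "\<dots> = ennreal (2 * (pi - 2 * b)) / ennreal (2*pi)"
    using cos_sq_set[OF z] by (subst emeasure_Unif) (auto simp: b_def)
  also have "\<dots> = ennreal ((pi - 2*b) / pi)"
    using b by (subst divide_ennreal) (auto simp: field_simps)
  finally have "measure Unif {t. K * (sin (t + c))\<^sup>2 \<le> y} = (pi - 2*b) / pi"
    using b by (simp add: measure_def)
  moreover have "arccos (2 * y / K - 1) = 2 * b"
  proof -
    have "cos (2*b) = 2 * z - 1"
    proof -
      have "0 \<le> sqrt z" "sqrt z \<le> 1" using z by auto
      then have "cos (arccos (sqrt z)) = sqrt z" by (intro cos_arccos) linarith+
      then show ?thesis using z by (simp add: b_def cos_double_cos)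
    qed
    then have "arccos (2 * y / K - 1) = arccos (cos (2*b))" by (simp add: z_def)
    also have "\<dots> = 2*b" using b by (intro arccos_cos) auto
    finally show ?thesis .
  qed
  ultimately show ?thesis by (simp add: field_simps)
qed

lemma periodic_sum_shift:
  fixes F :: "nat \<Rightarrow> real"
  assumes per: "\<And>i. F (i + n) = F i"
  shows "(\<Sum>i<n. F (i + s)) = (\<Sum>i<n. F i)"
proof (induction s)
  case (Suc s)
  have "(\<Sum>i<Suc n. F (i + s)) = (\<Sum>i<n. F (Suc i + s)) + F s"
    by (subst sum.lessThan_Suc_shift) simp
  moreover have "(\<Sum>i<Suc n. F (i + s)) = (\<Sum>i<n. F (i + s)) + F (n + s)"
    by simp
  moreover have "F (n + s) = F s" using per[of s] by (simp add: add.commute)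
  ultimately show ?case using Suc by simp
qed simp

lemma sum_lessThan_add_nat:
  fixes f :: "nat \<Rightarrow> real"
  shows "(\<Sum>i<a + b. f i) = (\<Sum>i<a. f i) + (\<Sum>i<b. f (a + i))"
  by (induction b) (simp_all add: add.assoc)

lemma periodic_sum_W:
  fixes F :: "nat \<Rightarrow> real"
  assumes per: "\<And>i. F (i + n) = F i"
  shows "(\<Sum>i<n*W. F i) = real W * (\<Sum>i<n. F i)"
proof (induction W)
  case (Suc W)
  have "(\<Sum>i<n * Suc W. F i) = (\<Sum>i<n*W + n. F i)" by (simp add: algebra_simps)
  also have "\<dots> = (\<Sum>i<n*W. F i) + (\<Sum>i<n. F (n*W + i))"
    by (rule sum_lessThan_add_nat)
  also have "(\<Sum>i<n. F (n*W + i)) = (\<Sum>i<n. F i)"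
  proof -
    have "F (n*W + i) = F i" for i
    proof (induction W)
      case (Suc W)
      then show ?case using per[of "n*W + i"] by (simp add: algebra_simps)
    qed simp
    then show ?thesis by simp
  qed
  finally show ?case using Suc by (simp add: algebra_simps)
qed simp

lemma periodic_sum_main:
  fixes F :: "nat \<Rightarrow> real"
  assumes per: "\<And>i. F (i + n) = F i"
  shows "(\<Sum>k\<in>{2..n*W+1}. F (k - 1)) = real W * (\<Sum>i<n. F (i + s))"
proof -
  have "(\<Sum>k\<in>{2..n*W+1}. F (k - 1)) = (\<Sum>i\<in>{1..n*W}. F i)"
    by (rule sum.reindex_bij_witness[of _ "\<lambda>i. i + 1" "\<lambda>k. k - 1"]) auto
  also have "\<dots> = (\<Sum>i<n*W. F (Suc i))"
    by (rule sum.reindex_bij_witness[of _ "\<lambda>k. k + 1" "\<lambda>i. i - 1"]) auto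
  also have "\<dots> = real W * (\<Sum>i<n. F (Suc i))"
    by (rule periodic_sum_W) (use per in \<open>simp flip: add_Suc\<close>)
  also have "(\<Sum>i<n. F (Suc i)) = (\<Sum>i<n. F i)"
    using periodic_sum_shift[of F n 1, OF per] by simp
  also have "\<dots> = (\<Sum>i<n. F (i + s))"
    using periodic_sum_shift[of F n s, OF per] by simp
  finally show ?thesis .
qed

lemma cos_telescope:
  fixes a d :: real
  shows "(\<Sum>j<N. cos (a + real j * d)) * (2 * sin (d/2)) = sin (a + real N * d - d/2) - sin (a - d/2)"
proof (induction N)
  case (Suc N)
  have gen: "sin (x + h) - sin (x - h) = cos x * (2 * sin h)" for x h :: real
    by (simp add: sin_add sin_diff algebra_simps)
  have "cos (a + real N * d) * (2 * sin (d/2)) = sin (a + real N * d + d/2) - sin (a + real N * d - d/2)"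
    using gen[of "a + real N * d" "d/2"] by simp
  moreover have "sin (a + real (Suc N) * d - d/2) = sin (a + real N * d + d/2)" by (simp add: algebra_simps)
  moreover have "(\<Sum>j<Suc N. cos (a + real j * d)) * (2 * sin (d/2)) =
     (\<Sum>j<N. cos (a + real j * d)) * (2 * sin (d/2)) + cos (a + real N * d) * (2 * sin (d/2))"
    by (simp add: distrib_right)
  ultimately show ?case using Suc by linarith
qed simp

lemma Re_hcoef: "Re (hcoef z p n k) = sqrt z * cos (p + 2 * pi * (real k - 1) / real n)"
  by (simp add: hcoef_def cis.sel)

lemma sign_choice:
  fixes n :: nat and psi :: real
  assumes n: "n \<ge> 2" "even n" and gen: "real n * (psi + pi/2) / (2*pi) \<notin> \<int>"
  shows "\<exists>m0::nat. \<forall>j<n. (0 < cos (psi + 2 * pi * real (j + m0) / real n) \<longleftrightarrow> j < n div 2)"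
proof -
  define y where "y = real n * (psi + pi/2) / (2*pi)"
  define fl where "fl = floor y"
  define fr where "fr = y - of_int fl"
  have fr0: "0 \<le> fr" and fr1: "fr < 1" unfolding fr_def fl_def by linarith+
  have frn0: "fr \<noteq> 0"
  proof
    assume "fr = 0"
    then have "y = of_int fl" unfolding fr_def by simp
    then show False using gen unfolding y_def by (metis Ints_of_int)
  qed
  define q where "q = nat \<bar>fl\<bar>"
  define m0 where "m0 = nat (int n * int q - fl)"
  have "int n * int q \<ge> int q" using n by (simp add: mult_le_cancel_right1)
  moreover have "int q \<ge> fl" unfolding q_def by simp
  ultimately have m0r: "real m0 = real n * real q - of_int fl" unfolding m0_def
    by (simp add: of_nat_nat)
  have npos: "real n > 0" using n by simp
  have psi: "psi = 2 * pi * y / real n - pi/2" unfolding y_def using npos by (simp add: field_simps)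
  define N where "N = n div 2"
  have nN: "real n = 2 * real N" using n unfolding N_def by (metis even_two_times_div_two of_nat_mult of_nat_numeral)
  show ?thesis
  proof (intro exI allI impI)
    fix j assume j: "j < n"
    define x where "x = 2 * pi * (fr + real j) / real n"
    have Npos: "real N > 0" using npos nN by simp
    have xN: "x = pi * ((fr + real j) / real N)" unfolding x_def nN by simp
    have frpos: "fr > 0" using fr0 frn0 by simp
    have "psi + 2 * pi * real (j + m0) / real n = (x - pi/2) + 2 * pi * of_int (int q)"
    proof -
      have "real (j + m0) = real j + real n * real q - of_int fl" using m0r by simp
      then show ?thesis unfolding x_def psi fr_def using npos by (simp add: field_simps m0r)
    qed
    then have "(0 < cos (psi + 2 * pi * real (j + m0) / real n)) = (0 < cos (x - pi/2))"
      using periodic_int[of "\<lambda>x. 0 < cos x" "x - pi/2" "int q"] by simp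
    also have "\<dots> = (0 < sin x)" by (simp add: cos_diff)
    also have "\<dots> = (j < N)"
    proof (cases "j < N")
      case True
      then have "real j + 1 \<le> real N" by simp
      then have "(fr + real j) / real N < 1" "0 < (fr + real j) / real N"
        using Npos fr1 frpos by (simp_all add: field_simps)
      then have "x < pi" "0 < x" unfolding xN
        using mult_strict_left_mono[of "(fr + real j) / real N" 1 pi] pi_gt_zero by (simp, simp only: mult_pos_pos)
      then show ?thesis using True sin_gt_zero[of x] by simp
    next
      case False
      then have "real N \<le> real j" "real j + 1 \<le> real n" using j by simp_all
      then have "1 < (fr + real j) / real N" "(fr + real j) / real N < 2"
        using Npos fr1 frpos nN by (simp_all add: field_simps)
      then have "pi < x" "x < 2 * pi" unfolding xN
        using mult_strict_left_mono[of "(fr + real j) / real N" 2 pi]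
          mult_strict_left_mono[of 1 "(fr + real j) / real N" pi] pi_gt_zero by simp_all
      then have "0 < sin (x - pi)" by (intro sin_gt_zero) auto
      then have "sin x < 0" by (simp add: sin_diff)
      then show ?thesis using False by simp
    qed
    finally show "(0 < cos (psi + 2 * pi * real (j + m0) / real n)) = (j < n div 2)"
      unfolding N_def .
  qed
qed

lemma Yint_sum:
  assumes zu: "zeta_u > 0" and zt: "zeta_t > 0"
  shows "Yint W n zeta_u psi zeta_t t =
    (sqrt zeta_t * (\<Sum>k\<in>{2..n*W+1}. (if 0 < cos (psi + 2 * pi * real (k - 1) / real n)
        then cos (t + 2 * pi * real (k - 1) / real n) else 0)))\<^sup>2"
proof -
  have K1: "K1 W n zeta_u psi = {k\<in>{2..n*W+1}. 0 < cos (psi + 2 * pi * (real k - 1) / real n)}"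
    unfolding K1_def Re_hcoef using zu by (simp add: zero_less_mult_iff)
  have "Yint W n zeta_u psi zeta_t t = (\<Sum>k\<in>{2..n*W+1}. (if 0 < cos (psi + 2 * pi * (real k - 1) / real n)
        then sqrt zeta_t * cos (t + 2 * pi * (real k - 1) / real n) else 0))\<^sup>2"
    unfolding Yint_def K1 Re_hcoef by (rule arg_cong[where f="\<lambda>x. x\<^sup>2"], rule sum.inter_filter) simp
  also have "\<dots> = (sqrt zeta_t * (\<Sum>k\<in>{2..n*W+1}. (if 0 < cos (psi + 2 * pi * real (k - 1) / real n)
        then cos (t + 2 * pi * real (k - 1) / real n) else 0)))\<^sup>2"
  proof -
    have "(\<Sum>k\<in>{2..n*W+1}. (if 0 < cos (psi + 2 * pi * (real k - 1) / real n)
        then sqrt zeta_t * cos (t + 2 * pi * (real k - 1) / real n) else 0)) =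
      sqrt zeta_t * (\<Sum>k\<in>{2..n*W+1}. (if 0 < cos (psi + 2 * pi * real (k - 1) / real n)
        then cos (t + 2 * pi * real (k - 1) / real n) else 0))"
      unfolding sum_distrib_left
    proof (intro sum.cong refl)
      fix k :: nat assume "k \<in> {2..n*W+1}"
      then have eqk: "real k - 1 = real (k - 1)" by (simp add: of_nat_diff)
      show "(if 0 < cos (psi + 2 * pi * (real k - 1) / real n)
        then sqrt zeta_t * cos (t + 2 * pi * (real k - 1) / real n) else 0) =
        sqrt zeta_t * (if 0 < cos (psi + 2 * pi * real (k - 1) / real n)
        then cos (t + 2 * pi * real (k - 1) / real n) else 0)" unfolding eqk by simp
    qed
    then show ?thesis by (simp only:)
  qed
  finally show ?thesis .
qed

lemma Yint_form:
  fixes n W :: nat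
  assumes n: "n \<ge> 2" "even n" and W: "W \<ge> 1" and zu: "zeta_u > 0" and zt: "zeta_t > 0"
    and gen: "real n * (psi + pi/2) / (2*pi) \<notin> \<int>"
  shows "\<exists>c. \<forall>t. Yint W n zeta_u psi zeta_t t = zeta_t / (sin (pi / real n) / real W)\<^sup>2 * (sin (t + c))\<^sup>2"
proof -
  obtain m0 :: nat where m0: "\<And>j. j < n \<Longrightarrow> (0 < cos (psi + 2 * pi * real (j + m0) / real n) \<longleftrightarrow> j < n div 2)"
    using sign_choice[OF n gen] by blast
  define N where "N = n div 2"
  have npos: "real n > 0" using n by simp
  have nN: "real n = 2 * real N" using n unfolding N_def by (metis even_two_times_div_two of_nat_mult of_nat_numeral)
  have sinpos: "sin (pi / real n) > 0"
  proof (rule sin_gt_zero)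
    show "0 < pi / real n" using npos by simp
    show "pi / real n < pi" using n by (simp add: divide_less_eq)
  qed
  define c where "c = 2 * pi * real m0 / real n - pi / real n"
  show ?thesis
  proof (intro exI allI)
    fix t
    define F where "F i = (if 0 < cos (psi + 2 * pi * real i / real n) then cos (t + 2 * pi * real i / real n) else 0)" for i
    have per: "F (i + n) = F i" for i
    proof -
      have "2 * pi * real (i + n) / real n = 2 * pi * real i / real n + 2 * pi" using npos
        by (simp add: field_simps)
      then show ?thesis unfolding F_def by (simp add: add.assoc[symmetric])
    qed
    have "Yint W n zeta_u psi zeta_t t = (sqrt zeta_t * (\<Sum>k\<in>{2..n*W+1}. F (k - 1)))\<^sup>2"
      unfolding Yint_sum[OF zu zt] F_def ..
    also have "(\<Sum>k\<in>{2..n*W+1}. F (k - 1)) = real W * (\<Sum>i<n. F (i + m0))"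
      by (rule periodic_sum_main[of F n W m0, OF per])
    also have "(\<Sum>i<n. F (i + m0)) = (\<Sum>i<n. if i < N then cos (t + 2 * pi * real (i + m0) / real n) else 0)"
    proof (intro sum.cong refl)
      fix i assume "i \<in> {..<n}"
      then have "(0 < cos (psi + 2 * pi * real (i + m0) / real n)) = (i < N)" using m0[of i] unfolding N_def by simp
      then show "F (i + m0) = (if i < N then cos (t + 2 * pi * real (i + m0) / real n) else 0)"
        unfolding F_def by (simp only: if_P if_not_P)
    qed
    also have "\<dots> = (\<Sum>i<N. cos (t + 2 * pi * real (i + m0) / real n))"
    proof -
      have "{i\<in>{..<n}. i < N} = {..<N}" unfolding N_def by auto
      then show ?thesis by (simp add: sum.inter_filter[symmetric])
    qed
    also have "\<dots> = (\<Sum>i<N. cos ((t + 2 * pi * real m0 / real n) + real i * (2 * pi / real n)))"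
    proof (intro sum.cong refl arg_cong[where f=cos])
      fix i
      have "2 * pi * real (i + m0) / real n = 2 * pi * real m0 / real n + real i * (2 * pi / real n)"
        by (simp add: add_divide_distrib distrib_left)
      then show "t + 2 * pi * real (i + m0) / real n = (t + 2 * pi * real m0 / real n) + real i * (2 * pi / real n)"
        by linarith
    qed
    also have "\<dots> = - sin (t + c) / sin (pi / real n)"
    proof -
      define a where "a = t + 2 * pi * real m0 / real n"
      define d where "d = 2 * pi / real n"
      have d2: "d / 2 = pi / real n" unfolding d_def by simp
      have Nd: "real N * d = pi" unfolding d_def nN using npos nN by (simp add: field_simps)
      have "(\<Sum>i<N. cos (a + real i * d)) * (2 * sin (d/2)) = sin (a + real N * d - d/2) - sin (a - d/2)"
        by (rule cos_telescope)
      also have "sin (a + real N * d - d/2) = - sin (a - d/2)"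
        unfolding Nd by (simp add: sin_diff sin_add)
      finally have eq: "(\<Sum>i<N. cos (a + real i * d)) * (2 * sin (d/2)) = - sin (a - d/2) - sin (a - d/2)" .
      have ac: "a - pi / real n = t + c" using a_def c_def by linarith
      have "(\<Sum>i<N. cos (a + real i * d)) * (2 * sin (pi / real n)) = - 2 * sin (t + c)"
        using eq unfolding d2 ac by linarith
      then show ?thesis using sinpos unfolding a_def d_def by (simp add: field_simps)
    qed
    finally have "Yint W n zeta_u psi zeta_t t = (sqrt zeta_t * (real W * (- sin (t + c) / sin (pi / real n))))\<^sup>2" .
    also have "\<dots> = (sqrt zeta_t)\<^sup>2 * (real W)\<^sup>2 * (sin (t + c))\<^sup>2 / (sin (pi / real n))\<^sup>2"
      by (simp add: power_mult_distrib power_divide)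
    also have "\<dots> = zeta_t / (sin (pi / real n) / real W)\<^sup>2 * (sin (t + c))\<^sup>2"
      using zt W by (simp add: power_divide)
    finally show "Yint W n zeta_u psi zeta_t t = zeta_t / (sin (pi / real n) / real W)\<^sup>2 * (sin (t + c))\<^sup>2" .
  qed
qed

lemma sets_Unif_cong[measurable_cong]: "sets Unif = sets borel"
  by (simp add: Unif_def)

lemma Yint_measurable[measurable]:
  assumes "zeta_u > 0" "zeta_t > 0"
  shows "(\<lambda>p. Yint W n zeta_u (fst p) zeta_t (snd p)) \<in> borel_measurable (Unif \<Otimes>\<^sub>M Unif)"
proof -
  have "(\<lambda>p. Yint W n zeta_u (fst p) zeta_t (snd p)) = (\<lambda>p.
    (sqrt zeta_t * (\<Sum>k\<in>{2..n*W+1}. (if 0 < cos (fst p + 2 * pi * real (k - 1) / real n)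
        then cos (snd p + 2 * pi * real (k - 1) / real n) else 0)))\<^sup>2)"
    using Yint_sum[OF assms] by (simp add: fun_eq_iff)
  also have "\<dots> \<in> borel_measurable (Unif \<Otimes>\<^sub>M Unif)" by measurable
  finally show ?thesis .
qed

lemma alphaI_measurable[measurable]:
  assumes "zeta_u > 0"
  shows "alphaI W n zeta_u \<in> borel_measurable borel"
proof -
  have K1: "K1 W n zeta_u psi = {k\<in>{2..n*W+1}. 0 < cos (psi + 2 * pi * (real k - 1) / real n)}" for psi
    unfolding K1_def Re_hcoef using assms by (simp add: zero_less_mult_iff)
  have "alphaI W n zeta_u = (\<lambda>psi. (\<Sum>k\<in>{2..n*W+1}. (if 0 < cos (psi + 2 * pi * (real k - 1) / real n)
        then sqrt zeta_u * cos (psi + 2 * pi * (real k - 1) / real n) else 0))\<^sup>2)"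
    unfolding alphaI_def K1 Re_hcoef fun_eq_iff
    by (intro allI arg_cong[where f="\<lambda>x. x\<^sup>2"] sum.inter_filter) simp
  also have "\<dots> \<in> borel_measurable borel" by measurable
  finally show ?thesis .
qed

lemma AE_generic:
  assumes "n > 0"
  shows "AE psi in Unif. real n * (psi + pi/2) / (2*pi) \<notin> \<int>"
proof -
  have sub: "{psi. real n * (psi + pi/2) / (2*pi) \<in> \<int>} \<subseteq> range (\<lambda>k::int. 2 * pi * of_int k / real n - pi/2)"
  proof
    fix psi assume "psi \<in> {psi. real n * (psi + pi/2) / (2*pi) \<in> \<int>}"
    then obtain k where k: "real n * (psi + pi/2) / (2*pi) = of_int k" by (auto elim: Ints_cases)
    then have "psi = 2 * pi * of_int k / real n - pi/2" using assms by (simp add: field_simps)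
    then show "psi \<in> range (\<lambda>k::int. 2 * pi * of_int k / real n - pi/2)" by blast
  qed
  have "countable {psi. real n * (psi + pi/2) / (2*pi) \<in> \<int>}"
    by (rule countable_subset[OF sub]) simp
  then have "{psi. real n * (psi + pi/2) / (2*pi) \<in> \<int>} \<in> null_sets lborel"
    by (rule countable_imp_null_set_lborel)
  then have "AE psi in lborel. psi \<notin> {psi. real n * (psi + pi/2) / (2*pi) \<in> \<int>}"
    by (rule AE_not_in)
  then show ?thesis unfolding Unif_def
    by (intro AE_uniform_measureI) (auto elim: eventually_mono)
qed

lemma Yint_dist:
  fixes n W :: nat
  assumes n: "n \<ge> 2" "even n" and W: "W \<ge> 1" and zu: "zeta_u > 0" and zt: "zeta_t > 0"
    and gen: "real n * (psi + pi/2) / (2*pi) \<notin> \<int>" and B[measurable]: "B \<in> sets borel"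
  shows "emeasure Unif {t. Yint W n zeta_u psi zeta_t t \<in> B} =
    emeasure Unif {t. zeta_t / (sin (pi / real n) / real W)\<^sup>2 * (sin t)\<^sup>2 \<in> B}"
proof -
  obtain c where c: "\<And>t. Yint W n zeta_u psi zeta_t t = zeta_t / (sin (pi / real n) / real W)\<^sup>2 * (sin (t + c))\<^sup>2"
    using Yint_form[OF n W zu zt gen] by blast
  define K where "K = zeta_t / (sin (pi / real n) / real W)\<^sup>2"
  show ?thesis unfolding c K_def[symmetric]
    by (rule Unif_shift[where P="\<lambda>x. K * (sin x)\<^sup>2 \<in> B"]) auto
qed

lemma prod_emeasure:
  fixes n W :: nat
  assumes n: "n \<ge> 2" "even n" and W: "W \<ge> 1" and zu: "zeta_u > 0" and zt: "zeta_t > 0"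
    and A[measurable]: "A \<in> sets borel" and B[measurable]: "B \<in> sets borel"
  shows "emeasure (Unif \<Otimes>\<^sub>M Unif) {p. fst p \<in> A \<and> Yint W n zeta_u (fst p) zeta_t (snd p) \<in> B} =
    emeasure Unif {t. zeta_t / (sin (pi / real n) / real W)\<^sup>2 * (sin t)\<^sup>2 \<in> B} * emeasure Unif A"
proof -
  interpret U: prob_space Unif by (rule prob_space_Unif)
  define q where "q = emeasure Unif {t. zeta_t / (sin (pi / real n) / real W)\<^sup>2 * (sin t)\<^sup>2 \<in> B}"
  have Ym[measurable]: "(\<lambda>p. Yint W n zeta_u (fst p) zeta_t (snd p)) \<in> borel_measurable (Unif \<Otimes>\<^sub>M Unif)"
    using zu zt by (rule Yint_measurable)
  have X: "{p. fst p \<in> A \<and> Yint W n zeta_u (fst p) zeta_t (snd p) \<in> B} \<in> sets (Unif \<Otimes>\<^sub>M Unif)"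
  proof -
    have "{p. fst p \<in> A \<and> Yint W n zeta_u (fst p) zeta_t (snd p) \<in> B} =
      {p \<in> space (Unif \<Otimes>\<^sub>M Unif). fst p \<in> A \<and> Yint W n zeta_u (fst p) zeta_t (snd p) \<in> B}"
      by (simp add: space_pair_measure)
    also have "\<dots> \<in> sets (Unif \<Otimes>\<^sub>M Unif)" by measurable
    finally show ?thesis .
  qed
  have "emeasure (Unif \<Otimes>\<^sub>M Unif) {p. fst p \<in> A \<and> Yint W n zeta_u (fst p) zeta_t (snd p) \<in> B} =
      (\<integral>\<^sup>+x. emeasure Unif (Pair x -` {p. fst p \<in> A \<and> Yint W n zeta_u (fst p) zeta_t (snd p) \<in> B}) \<partial>Unif)"
    by (rule U.emeasure_pair_measure_alt[OF X])
  also have "\<dots> = (\<integral>\<^sup>+x. q * indicator A x \<partial>Unif)"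
  proof (rule nn_integral_cong_AE)
    show "AE x in Unif. emeasure Unif (Pair x -` {p. fst p \<in> A \<and> Yint W n zeta_u (fst p) zeta_t (snd p) \<in> B}) = q * indicator A x"
    proof (rule eventually_mono[OF AE_generic[of n]])
      show "0 < n" using n by simp
      fix x assume gen: "real n * (x + pi/2) / (2*pi) \<notin> \<int>"
      show "emeasure Unif (Pair x -` {p. fst p \<in> A \<and> Yint W n zeta_u (fst p) zeta_t (snd p) \<in> B}) = q * indicator A x"
      proof (cases "x \<in> A")
        case True
        then have "Pair x -` {p. fst p \<in> A \<and> Yint W n zeta_u (fst p) zeta_t (snd p) \<in> B} = {t. Yint W n zeta_u x zeta_t t \<in> B}"
          by auto
        then show ?thesis using True Yint_dist[OF n W zu zt gen B] by (simp add: q_def)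
      next
        case False
        then show ?thesis by simp
      qed
    qed
  qed
  also have "\<dots> = q * emeasure Unif A" by (rule nn_integral_cmult_indicator) simp
  finally show ?thesis unfolding q_def .
qed

theorem theorem4:
  fixes W mu :: nat and zeta_u zeta_t :: real
  assumes "W \<ge> 1" and "mu \<ge> 2" and "even mu"
    and "zeta_u > 0" and "zeta_t > 0"
  defines "V \<equiv> sin (pi / real mu) / real W"
  shows "(AE psi_u in Unif.
            \<forall>y. 0 \<le> y \<and> y \<le> zeta_t / V\<^sup>2 \<longrightarrow>
              measure Unif {psi_t \<in> space Unif. Yint W mu zeta_u psi_u zeta_t psi_t \<le> y}
                = 1 - arccos (2 * V\<^sup>2 / zeta_t * y - 1) / pi)
       \<and> prob_space.indep_var (Unif \<Otimes>\<^sub>M Unif) borel fst borel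
            (\<lambda>p. Yint W mu zeta_u (fst p) zeta_t (snd p))
       \<and> prob_space.indep_var (Unif \<Otimes>\<^sub>M Unif) borel (\<lambda>p. alphaI W mu zeta_u (fst p)) borel
            (\<lambda>p. Yint W mu zeta_u (fst p) zeta_t (snd p))"
proof -
  note W = assms(1) and n = assms(2,3) and zu = assms(4) and zt = assms(5)
  have npos: "real mu > 0" using n by simp
  have sinpos: "sin (pi / real mu) > 0"
  proof (rule sin_gt_zero)
    show "0 < pi / real mu" using npos by simp
    show "pi / real mu < pi" using n by (simp add: divide_less_eq)
  qed
  have Vpos: "V > 0" unfolding V_def using sinpos W by simp
  define K where "K = zeta_t / V\<^sup>2"
  have Kpos: "K > 0" unfolding K_def using zt Vpos by simp
  have P1: "AE psi_u in Unif.
            \<forall>y. 0 \<le> y \<and> y \<le> zeta_t / V\<^sup>2 \<longrightarrow>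
              measure Unif {psi_t \<in> space Unif. Yint W mu zeta_u psi_u zeta_t psi_t \<le> y}
                = 1 - arccos (2 * V\<^sup>2 / zeta_t * y - 1) / pi"
  proof (rule eventually_mono[OF AE_generic[of mu]])
    show "0 < mu" using n by simp
    fix psi assume gen: "real mu * (psi + pi/2) / (2*pi) \<notin> \<int>"
    obtain c where c: "\<And>t. Yint W mu zeta_u psi zeta_t t = K * (sin (t + c))\<^sup>2"
      using Yint_form[OF n W zu zt gen] unfolding K_def V_def by blast
    show "\<forall>y. 0 \<le> y \<and> y \<le> zeta_t / V\<^sup>2 \<longrightarrow>
              measure Unif {psi_t \<in> space Unif. Yint W mu zeta_u psi zeta_t psi_t \<le> y}
                = 1 - arccos (2 * V\<^sup>2 / zeta_t * y - 1) / pi"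
    proof (intro allI impI)
      fix y assume y: "0 \<le> y \<and> y \<le> zeta_t / V\<^sup>2"
      have "measure Unif {psi_t \<in> space Unif. Yint W mu zeta_u psi zeta_t psi_t \<le> y}
          = measure Unif {t. K * (sin (t + c))\<^sup>2 \<le> y}" unfolding c by simp
      also have "\<dots> = 1 - arccos (2 * y / K - 1) / pi"
        using y Kpos by (intro sin_sq_cdf) (auto simp: K_def)
      also have "2 * y / K = 2 * V\<^sup>2 / zeta_t * y" unfolding K_def using zt Vpos by (simp add: field_simps)
      finally show "measure Unif {psi_t \<in> space Unif. Yint W mu zeta_u psi zeta_t psi_t \<le> y}
                = 1 - arccos (2 * V\<^sup>2 / zeta_t * y - 1) / pi" .
    qed
  qed
  interpret U: prob_space Unif by (rule prob_space_Unif)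
  interpret P: pair_prob_space Unif Unif
    by (simp add: pair_prob_space_def pair_sigma_finite_def prob_space_Unif prob_space_imp_sigma_finite)
  have Ym[measurable]: "(\<lambda>p. Yint W mu zeta_u (fst p) zeta_t (snd p)) \<in> borel_measurable (Unif \<Otimes>\<^sub>M Unif)"
    using zu zt by (rule Yint_measurable)
  have fm[measurable]: "fst \<in> borel_measurable (Unif \<Otimes>\<^sub>M Unif)" by measurable
  have P2: "P.indep_var borel fst borel (\<lambda>p. Yint W mu zeta_u (fst p) zeta_t (snd p))"
  proof (rule P.indep_varI2)
    show "fst \<in> borel_measurable (Unif \<Otimes>\<^sub>M Unif)" by (rule fm)
    show "(\<lambda>p. Yint W mu zeta_u (fst p) zeta_t (snd p)) \<in> borel_measurable (Unif \<Otimes>\<^sub>M Unif)" by (rule Ym)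
    fix A B :: "real set" assume A[measurable]: "A \<in> sets borel" and B[measurable]: "B \<in> sets borel"
    define q where "q = emeasure Unif {t. zeta_t / (sin (pi / real mu) / real W)\<^sup>2 * (sin t)\<^sup>2 \<in> B}"
    have sp: "space (Unif \<Otimes>\<^sub>M Unif) = UNIV" by (simp add: space_pair_measure)
    have e1: "(fst -` A \<inter> space (Unif \<Otimes>\<^sub>M Unif)) \<inter> ((\<lambda>p. Yint W mu zeta_u (fst p) zeta_t (snd p)) -` B \<inter> space (Unif \<Otimes>\<^sub>M Unif))
       = {p. fst p \<in> A \<and> Yint W mu zeta_u (fst p) zeta_t (snd p) \<in> B}" unfolding sp by auto
    have e2: "fst -` A \<inter> space (Unif \<Otimes>\<^sub>M Unif) = {p. fst p \<in> A \<and> Yint W mu zeta_u (fst p) zeta_t (snd p) \<in> UNIV}"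
      unfolding sp by auto
    have e3: "(\<lambda>p. Yint W mu zeta_u (fst p) zeta_t (snd p)) -` B \<inter> space (Unif \<Otimes>\<^sub>M Unif)
       = {p. fst p \<in> UNIV \<and> Yint W mu zeta_u (fst p) zeta_t (snd p) \<in> B}" unfolding sp by auto
    have one: "emeasure Unif UNIV = 1" using U.emeasure_space_1 by simp
    show "P.prob ((fst -` A \<inter> space (Unif \<Otimes>\<^sub>M Unif)) \<inter> ((\<lambda>p. Yint W mu zeta_u (fst p) zeta_t (snd p)) -` B \<inter> space (Unif \<Otimes>\<^sub>M Unif)))
       = P.prob (fst -` A \<inter> space (Unif \<Otimes>\<^sub>M Unif)) * P.prob ((\<lambda>p. Yint W mu zeta_u (fst p) zeta_t (snd p)) -` B \<inter> space (Unif \<Otimes>\<^sub>M Unif))"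
    proof -
      have m1: "emeasure (Unif \<Otimes>\<^sub>M Unif) {p. fst p \<in> A \<and> Yint W mu zeta_u (fst p) zeta_t (snd p) \<in> B} = q * emeasure Unif A"
        unfolding q_def by (rule prod_emeasure[OF n W zu zt A B])
      have m2: "emeasure (Unif \<Otimes>\<^sub>M Unif) {p. fst p \<in> A \<and> Yint W mu zeta_u (fst p) zeta_t (snd p) \<in> UNIV} = emeasure Unif A"
        using prod_emeasure[OF n W zu zt A, of UNIV] one by simp
      have m3: "emeasure (Unif \<Otimes>\<^sub>M Unif) {p. fst p \<in> UNIV \<and> Yint W mu zeta_u (fst p) zeta_t (snd p) \<in> B} = q"
        unfolding q_def using prod_emeasure[OF n W zu zt _ B, of UNIV] one by simp
      show ?thesis using m1 m2 m3 unfolding measure_def sp by (simp add: Int_def enn2real_mult mult.commute)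
    qed
  qed
  have P3: "P.indep_var borel (\<lambda>p. alphaI W mu zeta_u (fst p)) borel (\<lambda>p. Yint W mu zeta_u (fst p) zeta_t (snd p))"
    using P.indep_var_compose[OF P2 alphaI_measurable[OF zu, of W mu] measurable_ident_sets[OF refl]]
    by (simp add: comp_def)
  show ?thesis using P1 P2 P3 by blast
qed


end
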